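(* Let $V$ be a finite set of variables, let $(\mathit{base}, \mathit{stay}, \mathit{step}, \mathit{conc})$ be a generalized acceleration lemma (GAL) over $V$, and let $\mathit{inv}$ be a first-order formula with free variables in $V$. Let $\mathit{inv}' := \mathit{inv}[V \mapsto V']$. Then $(\mathit{base} \land \mathit{inv},\ \mathit{stay} \land \mathit{inv}',\ \mathit{step} \land \mathit{inv}',\ \mathit{conc} \land \mathit{inv})$ is also a GAL over $V$.
   Context: Fix a first-order theory $T$. For a set of variables $X$, $\mathcal{A}(X)$ denotes the set of assignments $\nu: X \to \mathcal{V}$ (values). $X' = \{x' \mid x \in X\}$ is a disjoint primed copy of $X$; for $\nu \in \mathcal{A}(X)$, $\nu' \in \mathcal{A}(X')$ is given by $\nu'(x') = \nu(x)$; for $\nu_1,\nu_2 \in \mathcal{A}(X)$, $\langle \nu_1,\nu_2\rangle := \nu_1 \uplus \nu_2'$. $\nu \models_T \alpha$ denotes entailment in $T$. For a formula $\alpha$, $\alpha[V\mapsto V']$ is the result of replacing each $v\in V$ simultaneously by $v'$. A generalized acceleration lemma (GAL) over $V$ is a tuple $(\mathit{base}, \mathit{stay}, \mathit{step}, \mathit{conc})$ of first-order formulas with $\mathit{base}, \mathit{conc}$ having free variables in $V$ and $\mathit{stay}, \mathit{step}$ having free variables in $V \cup V'$, such that: (I) for every sequence $\alpha \in \mathcal{A}(V)^\omega$ with $\alpha[0] \models_T \mathit{conc}$, if (a) for all $i$, $\langle\alpha[i],\alpha[i+1]\rangle \models_T \mathit{step} \lor \mathit{stay}$, and (b) for all $i$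 there is $j \ge i$ with $\langle\alpha[j],\alpha[j+1]\rangle \models_T \mathit{step}$, then there is $k$ with $\alpha[k] \models_T \mathit{base}$; and (II) for all $\nu,\nu' \in \mathcal{A}(V)$ with $\nu \models_T \mathit{conc}$ and $\langle \nu,\nu'\rangle \models_T \mathit{step}\lor\mathit{stay}$, we have $\nu' \models_T \mathit{conc}$. *)

theory Defs
  imports Main
begin

text \<open>Free variables are of type 'x; bound variables are de Bruijn indices, so that
  renaming free variables is automatically capture-free.\<close>

datatype ('f, 'x) trm = Var 'x | Bnd nat | Fn 'f "('f, 'x) trm list"

datatype ('f, 'p, 'x) fm =
    FF
  | Atom 'p "('f, 'x) trm list"
  | Eq "('f, 'x) trm" "('f, 'x) trm"
  | Neg "('f, 'p, 'x) fm"
  | And "('f, 'p, 'x) fm" "('f, 'p, 'x) fm"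
  | Or "('f, 'p, 'x) fm" "('f, 'p, 'x) fm"
  | Ex "('f, 'p, 'x) fm"
  | All "('f, 'p, 'x) fm"

text \<open>A structure with carrier UNIV :: 'val (the values).\<close>
record ('f, 'p, 'val) struc =
  fn_interp :: "'f \<Rightarrow> 'val list \<Rightarrow> 'val"
  pred_interp :: "'p \<Rightarrow> 'val list \<Rightarrow> bool"

fun eval_trm :: "('f, 'p, 'val) struc \<Rightarrow> ('x \<Rightarrow> 'val) \<Rightarrow> (nat \<Rightarrow> 'val) \<Rightarrow> ('f, 'x) trm \<Rightarrow> 'val" where
  "eval_trm S e b (Var x) = e x"
| "eval_trm S e b (Bnd n) = b n"
| "eval_trm S e b (Fn f ts) = fn_interp S f (map (eval_trm S e b) ts)"

definition push :: "'val \<Rightarrow> (nat \<Rightarrow> 'val) \<Rightarrow> nat \<Rightarrow> 'val" where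
  "push a b = (\<lambda>n. if n = 0 then a else b (n - 1))"

fun sat :: "('f, 'p, 'val) struc \<Rightarrow> ('x \<Rightarrow> 'val) \<Rightarrow> (nat \<Rightarrow> 'val) \<Rightarrow> ('f, 'p, 'x) fm \<Rightarrow> bool" where
  "sat S e b FF = False"
| "sat S e b (Atom p ts) = pred_interp S p (map (eval_trm S e b) ts)"
| "sat S e b (Eq t u) = (eval_trm S e b t = eval_trm S e b u)"
| "sat S e b (Neg \<phi>) = (\<not> sat S e b \<phi>)"
| "sat S e b (And \<phi> \<psi>) = (sat S e b \<phi> \<and> sat S e b \<psi>)"
| "sat S e b (Or \<phi> \<psi>) = (sat S e b \<phi> \<or> sat S e b \<psi>)"
| "sat S e b (Ex \<phi>) = (\<exists>a. sat S e (push a b) \<phi>)"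
| "sat S e b (All \<phi>) = (\<forall>a. sat S e (push a b) \<phi>)"

abbreviation fvars :: "('f, 'p, 'x) fm \<Rightarrow> 'x set" where
  "fvars \<equiv> set3_fm"

definition is_model :: "('f, 'p, 'x) fm set \<Rightarrow> ('f, 'p, 'val) struc \<Rightarrow> bool" where
  "is_model T S = (\<forall>\<phi>\<in>T. \<forall>e b. sat S e b \<phi>)"

definition entails :: "('f, 'p, 'x) fm set \<Rightarrow> ('x \<Rightarrow> 'val) \<Rightarrow> ('f, 'p, 'x) fm \<Rightarrow> bool" where
  "entails T e \<phi> = (\<forall>S b. is_model T S \<longrightarrow> sat S e b \<phi>)"

datatype 'v pvar = Unp 'v | Prm 'v

text \<open>\<nu> \<in> A(V) seen as an environment for formulas over V (primed variables irrelevant).\<close>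
definition env1 :: "('v \<Rightarrow> 'val) \<Rightarrow> 'v pvar \<Rightarrow> 'val" where
  "env1 \<nu> = (\<lambda>x. case x of Unp v \<Rightarrow> \<nu> v | Prm v \<Rightarrow> undefined)"

text \<open>\<langle>\<nu>1,\<nu>2\<rangle> = \<nu>1 \<uplus> \<nu>2'.\<close>
definition env2 :: "('v \<Rightarrow> 'val) \<Rightarrow> ('v \<Rightarrow> 'val) \<Rightarrow> 'v pvar \<Rightarrow> 'val" where
  "env2 \<nu>1 \<nu>2 = (\<lambda>x. case x of Unp v \<Rightarrow> \<nu>1 v | Prm v \<Rightarrow> \<nu>2 v)"

definition prime_fm :: "'v set \<Rightarrow> ('f, 'p, 'v pvar) fm \<Rightarrow> ('f, 'p, 'v pvar) fm" where
  "prime_fm V \<phi> = map_fm id id (\<lambda>x. case x of Unp v \<Rightarrow> (if v \<in> V then Prm v else Unp v) | Prm v \<Rightarrow> Prm v) \<phi>"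

definition is_GAL :: "('f, 'p, 'v pvar) fm set \<Rightarrow> 'v set \<Rightarrow>
    ('f, 'p, 'v pvar) fm \<Rightarrow> ('f, 'p, 'v pvar) fm \<Rightarrow> ('f, 'p, 'v pvar) fm \<Rightarrow> ('f, 'p, 'v pvar) fm \<Rightarrow>
    ('val itself) \<Rightarrow> bool" where
  "is_GAL T V base stay step conc (_ :: 'val itself) \<longleftrightarrow>
     fvars base \<subseteq> Unp ` V \<and> fvars conc \<subseteq> Unp ` V \<and>
     fvars stay \<subseteq> Unp ` V \<union> Prm ` V \<and> fvars step \<subseteq> Unp ` V \<union> Prm ` V \<and>
     (\<forall>\<alpha> :: nat \<Rightarrow> 'v \<Rightarrow> 'val.
        entails T (env1 (\<alpha> 0)) conc \<longrightarrow>
        (\<forall>i. entails T (env2 (\<alpha> i) (\<alpha> (Suc i))) (Or step stay)) \<longrightarrow>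
        (\<forall>i. \<exists>j\<ge>i. entails T (env2 (\<alpha> j) (\<alpha> (Suc j))) step) \<longrightarrow>
        (\<exists>k. entails T (env1 (\<alpha> k)) base)) \<and>
     (\<forall>\<nu> \<nu>' :: 'v \<Rightarrow> 'val.
        entails T (env1 \<nu>) conc \<longrightarrow> entails T (env2 \<nu> \<nu>') (Or step stay) \<longrightarrow>
        entails T (env1 \<nu>') conc)"

end

theory Submission
  imports Defs
begin

lemma eval_trm_cong:
  "(\<And>x. x \<in> set2_trm t \<Longrightarrow> e x = e' x) \<Longrightarrow> eval_trm S e b t = eval_trm S e' b t"
proof (induction t)
  case (Fn f ts)
  then have "map (eval_trm S e b) ts = map (eval_trm S e' b) ts" by (auto intro!: map_cong)
  then show ?case by (simp only: eval_trm.simps)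
qed auto

lemma sat_cong:
  "(\<And>x. x \<in> fvars \<phi> \<Longrightarrow> e x = e' x) \<Longrightarrow> sat S e b \<phi> = sat S e' b \<phi>"
proof (induction \<phi> arbitrary: b)
  case (Atom p ts)
  then show ?case by (auto intro!: arg_cong[where f="pred_interp S p"] map_cong eval_trm_cong)
next
  case (Eq t u)
  then show ?case using eval_trm_cong[of t e e' S b] eval_trm_cong[of u e e' S b] by auto
qed auto

lemma eval_trm_map:
  "eval_trm S e b (map_trm id g t) = eval_trm S (e \<circ> g) b t"
proof (induction t)
  case (Fn f ts)
  have "map (eval_trm S e b \<circ> map_trm (\<lambda>a. a) g) ts = map (eval_trm S (e \<circ> g) b) ts"
    by (intro map_cong refl) (use Fn in \<open>simp add: id_def comp_def\<close>)
  then show ?case by (simp only: eval_trm.simps trm.map map_map id_apply)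
qed auto

lemma sat_map:
  "sat S e b (map_fm id id g \<phi>) = sat S (e \<circ> g) b \<phi>"
  by (induction \<phi> arbitrary: b) (auto simp: eval_trm_map comp_def)

lemma sat_prime:
  assumes "fvars psi \<subseteq> Unp ` V"
  shows "sat S (env2 \<nu> \<nu>') b (prime_fm V psi) = sat S (env1 \<nu>') b psi"
  unfolding prime_fm_def sat_map
  by (rule sat_cong) (use assms in \<open>auto simp: env1_def env2_def\<close>)

lemma fv_prime:
  "fvars (prime_fm V psi) = (\<lambda>x. case x of Unp v \<Rightarrow> (if v \<in> V then Prm v else Unp v) | Prm v \<Rightarrow> Prm v) ` fvars psi"
  unfolding prime_fm_def by (simp add: fm.set_map)

lemma entails_And: "entails T e (And a c) = (entails T e a \<and> entails T e c)"
  unfolding entails_def by auto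

lemma entails_Or_weak:
  "entails T e (Or (And a c) (And d c)) \<Longrightarrow> entails T e (Or a d)"
  unfolding entails_def by auto

lemma entails_Or_inv:
  assumes "fvars psi \<subseteq> Unp ` V"
  shows "entails T (env2 \<nu> \<nu>') (Or (And a (prime_fm V psi)) (And d (prime_fm V psi))) \<Longrightarrow> entails T (env1 \<nu>') psi"
  unfolding entails_def using sat_prime[OF assms] by fastforce

lemma entails_step_inv:
  assumes "fvars psi \<subseteq> Unp ` V"
  shows "entails T (env2 \<nu> \<nu>') (And a (prime_fm V psi)) \<Longrightarrow> entails T (env1 \<nu>') psi"
  unfolding entails_def using sat_prime[OF assms] by fastforce

theorem lemma4:
  fixes T :: "('f, 'p, 'v pvar) fm set" and V :: "'v set"
    and base stay step conc inv :: "('f, 'p, 'v pvar) fm"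
  assumes "finite V"
    and "is_GAL T V base stay step conc TYPE('val)"
    and "fvars inv \<subseteq> Unp ` V"
  shows "is_GAL T V (And base inv) (And stay (prime_fm V inv)) (And step (prime_fm V inv))
           (And conc inv) TYPE('val)"
proof -
  note G = assms(2)[unfolded is_GAL_def]
  have fv: "fvars (prime_fm V inv) \<subseteq> Unp ` V \<union> Prm ` V"
    using assms(3) unfolding fv_prime by auto
  have I: "\<exists>k. entails T (env1 (\<alpha> k)) (And base inv)"
    if a0: "entails T (env1 (\<alpha> 0)) (And conc inv)"
      and a1: "\<forall>i. entails T (env2 (\<alpha> i) (\<alpha> (Suc i))) (Or (And step (prime_fm V inv)) (And stay (prime_fm V inv)))"
      and a2: "\<forall>i. \<exists>j\<ge>i. entails T (env2 (\<alpha> j) (\<alpha> (Suc j))) (And step (prime_fm V inv))"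
    for \<alpha> :: "nat \<Rightarrow> 'v \<Rightarrow> 'val"
  proof -
    have inv_all: "entails T (env1 (\<alpha> k)) inv" for k
    proof (cases k)
      case 0 then show ?thesis using a0 entails_And by blast
    next
      case (Suc m) then show ?thesis using a1 entails_Or_inv[OF assms(3)] by blast
    qed
    have "\<exists>k. entails T (env1 (\<alpha> k)) base"
      using G a0 a1 a2 entails_And entails_Or_weak by metis
    then show ?thesis using inv_all entails_And by blast
  qed
  have II: "entails T (env1 \<nu>') (And conc inv)"
    if "entails T (env1 \<nu>) (And conc inv)"
      "entails T (env2 \<nu> \<nu>') (Or (And step (prime_fm V inv)) (And stay (prime_fm V inv)))"
    for \<nu> \<nu>' :: "'v \<Rightarrow> 'val"
    using that G entails_And entails_Or_weak entails_Or_inv[OF assms(3)] by metis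
  show ?thesis unfolding is_GAL_def
    using G fv assms(3) I II by auto
qed

end
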